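(* Let $\mathcal{T}$ be the set of integer triples $(A,B,C)$ with $A\le B\le C$, $A+B+C>0$, $\gcd(A,B,C)=1$ and $AB+BC+CA=q^2$ for some integer $q\ge 0$. Define $T:\mathcal{T}\to\mathbb{Z}^3$ by $T(A,B,C)=\mathrm{sort}(-A,\,B+2A,\,C+2A)$ if $A<0$, and $T(A,B,C)=\mathrm{sort}(A,\,B,\,A+B+C-2\sqrt{AB+BC+CA})$ if $A\ge 0$, where $\mathrm{sort}$ arranges the entries in non-decreasing order. Then $T$ maps $\mathcal{T}$ into $\mathcal{T}$, $T(0,0,1)=(0,0,1)$, and $A'+B'+C'<A+B+C$ for $(A',B',C')=T(A,B,C)$ whenever $(A,B,C)\ne(0,0,1)$. Consequently, for every $(A,B,C)\in\mathcal{T}$ some iterate $T^k(A,B,C)$ equals $(0,0,1)$. *)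

theory Defs
  imports Main
begin

type_synonym triple = "int \<times> int \<times> int"

definition sort3 :: "int \<Rightarrow> int \<Rightarrow> int \<Rightarrow> triple" where
  "sort3 x y z = (case sort [x, y, z] of [a, b, c] \<Rightarrow> (a, b, c))"

definition calT :: "triple set" where
  "calT = {(A, B, C). A \<le> B \<and> B \<le> C \<and> A + B + C > 0 \<and> gcd A (gcd B C) = 1 \<and>
            (\<exists>q::int. q \<ge> 0 \<and> A*B + B*C + C*A = q^2)}"

definition sqrtZ :: "int \<Rightarrow> int" where
  "sqrtZ s = (THE q. q \<ge> 0 \<and> q^2 = s)"

definition Tmap :: "triple \<Rightarrow> triple" where
  "Tmap t = (case t of (A, B, C) \<Rightarrow>
     if A < 0 then sort3 (-A) (B + 2*A) (C + 2*A)
     else sort3 A B (A + B + C - 2 * sqrtZ (A*B + B*C + C*A)))"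

definition tsum :: "triple \<Rightarrow> int" where
  "tsum t = (case t of (A, B, C) \<Rightarrow> A + B + C)"

end

theory Submission
  imports Defs "HOL-Computational_Algebra.Primes"
begin

lemma sort3_cases: "sort3 x y z = (if x \<le> y then (if y \<le> z then (x,y,z) else if x \<le> z then (x,z,y) else (z,x,y))
   else (if x \<le> z then (y,x,z) else if y \<le> z then (y,z,x) else (z,y,x)))"
  unfolding sort3_def by auto

lemma gcd3_one_iff: "gcd (a::int) (gcd b c) = 1 \<longleftrightarrow> (\<forall>d. d dvd a \<and> d dvd b \<and> d dvd c \<longrightarrow> d dvd 1)"
proof
  assume "gcd a (gcd b c) = 1" thus "\<forall>d. d dvd a \<and> d dvd b \<and> d dvd c \<longrightarrow> d dvd 1"
    by (metis gcd_greatest)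
next
  assume h: "\<forall>d. d dvd a \<and> d dvd b \<and> d dvd c \<longrightarrow> d dvd 1"
  have "gcd a (gcd b c) dvd 1" using h by (meson dvd_trans gcd_dvd1 gcd_dvd2)
  thus "gcd a (gcd b c) = 1" by simp
qed


lemma sort3_props:
  assumes "sort3 x y z = (a,b,c)"
  shows "a \<le> b \<and> b \<le> c \<and> a+b+c = x+y+z \<and> a*b+b*c+c*a = x*y+y*z+z*x \<and>
     (\<forall>d. (d dvd a \<and> d dvd b \<and> d dvd c) = (d dvd x \<and> d dvd y \<and> d dvd z))"
  using assms unfolding sort3_cases
  by (simp split: if_splits; elim conjE; simp add: algebra_simps; blast)

lemma sort3_calT:
  assumes "x+y+z > 0" "gcd x (gcd y z) = 1" "q \<ge> 0" "x*y+y*z+z*x = q^2"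
  shows "sort3 x y z \<in> calT \<and> tsum (sort3 x y z) = x+y+z"
proof -
  obtain a b c where e: "sort3 x y z = (a,b,c)" by (cases "sort3 x y z") auto
  note p = sort3_props[OF e]
  show ?thesis unfolding e calT_def tsum_def using p assms unfolding gcd3_one_iff by auto
qed


lemma sqrtZ_sq: "q \<ge> 0 \<Longrightarrow> sqrtZ (q^2) = q"
  unfolding sqrtZ_def by (rule the_equality) (auto simp: power2_eq_imp_eq)

lemma negB: assumes "(A::int) < 0" "A \<le> B" "B \<le> C" "A+B+C>0" "A*B+B*C+C*A \<ge> 0" shows "B \<ge> 0"
proof (rule ccontr)
  assume "\<not> B \<ge> 0"
  hence B: "B < 0" by simp
  have 1: "C * (A+B) < -(A+B)*(A+B)" using assms B by (intro mult_strict_right_mono_neg) auto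
  have 2: "A*B > 0" using assms B by (simp add: zero_less_mult_iff)
  have 3: "A*B+B*C+C*A = A*B + C*(A+B)" by (simp add: power2_eq_square algebra_simps)
  have 4: "-(A+B)*(A+B) = -(A*A) - 2*(A*B) - B*B" by (simp add: power2_eq_square algebra_simps)
  have 5: "A*A \<ge> 0" "B*B \<ge> 0" by simp_all
  show False using 1 2 3 4 5 assms(5) by linarith
qed

lemma negsum: assumes "(A::int) < 0" "0 \<le> B" "B \<le> C" "A+B+C>0" "A*B+B*C+C*A \<ge> 0" shows "3*A+B+C > 0"
proof -
  have "0 \<le> (B-C)*(B-C)" by simp
  moreover have "(B-C)*(B-C) = (B+C)*(B+C) - 4*(B*C)" by (simp add: power2_eq_square algebra_simps)
  ultimately have a: "4*(B*C) \<le> (B+C)*(B+C)" by linarith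
  have "A*B+B*C+C*A = B*C - (-A)*(B+C)" by (simp add: power2_eq_square algebra_simps)
  hence b: "(-A)*(B+C) \<le> B*C" using assms(5) by linarith
  have c: "(4*(-A))*(B+C) = 4*((-A)*(B+C))" by (simp add: power2_eq_square algebra_simps)
  have "(4*(-A))*(B+C) \<le> (B+C)*(B+C)" using a b c by linarith
  moreover have "B+C > 0" using assms by simp
  ultimately have "4*(-A) \<le> B+C" using mult_right_le_imp_le by blast
  thus ?thesis using assms by simp
qed

lemma posineq: assumes "(0::int) \<le> A" "A \<le> B" "B \<le> C" "0 < B" "q \<ge> 0" "A*B+B*C+C*A = q^2"
  shows "A+B < 2*q" "2*q < C+2*A+2*B"
proof -
  have f1: "B*(A+B) \<le> C*(A+B)" using assms by (intro mult_right_mono) auto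
  have f2: "A*A \<le> A*B" using assms by (intro mult_left_mono) auto
  have f3: "B*B > 0" using assms by simp
  have e0: "(2*q)^2 = 4*(A*B+B*C+C*A)" using assms(6) by simp
  have e00: "4*(A*B+B*C+C*A) = 4*(A*B) + 4*(C*(A+B))" by (simp add: algebra_simps)
  have e1: "(2*q)^2 = 4*(A*B) + 4*(C*(A+B))" using e0 e00 by simp
  have e2: "(A+B)^2 = A*A + 2*(A*B) + B*B" by (simp add: power2_eq_square algebra_simps)
  have e3: "B*(A+B) = A*B + B*B" by (simp add: power2_eq_square algebra_simps)
  have f4: "A*B \<ge> 0" using assms by simp
  have "(A+B)^2 < (2*q)^2" using f1 f2 f3 f4 e1 e2 e3 by linarith
  moreover have "0 \<le> 2*q" using assms by simp
  ultimately show "A+B < 2*q" by (rule power_less_imp_less_base)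
  have g1: "C*C > 0" using assms by simp
  have g2: "A*A \<ge> 0" "B*B \<ge> 0" "A*B \<ge> 0" using assms by simp_all
  have e4: "(C+2*A+2*B)^2 = C*C + 4*(C*(A+B)) + 4*(A*A) + 8*(A*B) + 4*(B*B)" by (simp add: power2_eq_square algebra_simps)
  have "(2*q)^2 < (C+2*A+2*B)^2" using g1 g2 e1 e4 by linarith
  moreover have "0 \<le> C+2*A+2*B" using assms by simp
  ultimately show "2*q < C+2*A+2*B" by (rule power_less_imp_less_base)
qed

lemma gneg: "gcd (A::int) (gcd B C) = 1 \<Longrightarrow> gcd (-A) (gcd (B+2*A) (C+2*A)) = 1"
  unfolding gcd3_one_iff
proof (intro allI impI)
  fix d assume h: "\<forall>d. d dvd A \<and> d dvd B \<and> d dvd C \<longrightarrow> is_unit d"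
   and d: "d dvd - A \<and> d dvd B + 2 * A \<and> d dvd C + 2 * A"
  hence "d dvd A" by simp
  hence "d dvd 2*A" by simp
  with d have "d dvd B" "d dvd C" using dvd_add_left_iff by blast+
  with h \<open>d dvd A\<close> show "is_unit d" by blast
qed

lemma Qpos: "(A::int)*B+B*C+C*A = q^2 \<Longrightarrow> A*B+B*(A+B+C-2*q)+(A+B+C-2*q)*A = \<bar>A+B-q\<bar>^2"
proof -
  assume h: "(A::int)*B+B*C+C*A = q^2"
  have "A*B+B*(A+B+C-2*q)+(A+B+C-2*q)*A - (A+B-q)^2 = A*B+B*C+C*A - q^2"
    by (simp add: power2_eq_square algebra_simps)
  thus ?thesis using h by simp
qed
lemma Qneg: "(A::int)*B+B*C+C*A = q^2 \<Longrightarrow> (-A)*(B+2*A) + (B+2*A)*(C+2*A) + (C+2*A)*(-A) = q^2"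
proof -
  assume h: "(A::int)*B+B*C+C*A = q^2"
  have "(-A)*(B+2*A) + (B+2*A)*(C+2*A) + (C+2*A)*(-A) = A*B+B*C+C*A"
    by (simp add: algebra_simps)
  thus ?thesis using h by simp
qed

lemma my_prime_not_unit: "prime (p::int) \<Longrightarrow> is_unit p \<Longrightarrow> False" using not_prime_unit by blast
lemma dvdQ: "(p::int) dvd A \<Longrightarrow> p dvd B \<Longrightarrow> p dvd A*B+B*C+C*A" by simp

lemma gpos:
  assumes h4: "gcd A (gcd B C) = 1" and h6: "A*B+B*C+C*A = q^2" and Bp: "(B::int) > 0"
  shows "gcd A (gcd B (A+B+C-2*q)) = 1" unfolding gcd3_one_iff
proof (intro allI impI)
  fix d assume d: "d dvd A \<and> d dvd B \<and> d dvd (A+B+C-2*q)"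
  show "is_unit d"
  proof (rule ccontr)
    assume nu: "\<not> is_unit d"
    have "d \<noteq> 0" using d Bp by auto
    then obtain p where p: "p dvd d" "prime p" using nu prime_divisor_exists by blast
    have pA: "p dvd A" "p dvd B" "p dvd (A+B+C-2*q)" using p d dvd_trans by blast+
    have "p dvd A*B+B*C+C*A" using pA dvdQ by blast
    hence "p dvd q^2" using h6 by simp
    hence "p dvd q" using p(2) prime_dvd_power by blast
    hence q2: "p dvd 2*q" by simp
    have "p dvd (A+B+C-2*q) - A - B + 2*q" using dvd_add[OF dvd_diff[OF dvd_diff[OF pA(3) pA(1)] pA(2)] q2] .
    moreover have "(A+B+C-2*q) - A - B + 2*q = C" by simp
    ultimately have "p dvd C" by metis
    hence "is_unit p" using pA h4 unfolding gcd3_one_iff by blast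
    thus False using p(2) my_prime_not_unit by blast
  qed
qed

lemma step:
  assumes t: "t \<in> calT" "t \<noteq> (0,0,1)"
  shows "Tmap t \<in> calT \<and> tsum (Tmap t) < tsum t"
proof -
  obtain A B C where e: "t = (A,B,C)" by (cases t) auto
  from t obtain q where h: "A \<le> B" "B \<le> C" "A+B+C > 0" "gcd A (gcd B C) = 1" "q \<ge> 0"
     "A*B+B*C+C*A = q^2" unfolding e calT_def by auto
  show ?thesis
  proof (cases "A < 0")
    case True
    have B: "B \<ge> 0" using negB[OF True h(1-3)] h(6) by simp
    have s: "3*A+B+C > 0" using negsum[OF True B h(2,3)] h(6) by simp
    have g: "gcd (-A) (gcd (B+2*A) (C+2*A)) = 1" using h(4) by (rule gneg)
    have Q: "(-A)*(B+2*A) + (B+2*A)*(C+2*A) + (C+2*A)*(-A) = q^2" using h(6) by (rule Qneg)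
    have s': "(-A) + (B+2*A) + (C+2*A) > 0" using s by simp
    have tm: "Tmap t = sort3 (-A) (B+2*A) (C+2*A)" unfolding e Tmap_def using True by simp
    note r = sort3_calT[OF s' g h(5) Q]
    have es: "tsum t = A+B+C" unfolding e tsum_def by simp
    have r1: "sort3 (-A) (B+2*A) (C+2*A) \<in> calT" using r by (rule conjunct1)
    have r2: "tsum (sort3 (-A) (B+2*A) (C+2*A)) = (-A) + (B+2*A) + (C+2*A)" using r by (rule conjunct2)
    have "tsum (sort3 (-A) (B+2*A) (C+2*A)) < tsum t" using r2 es True by linarith
    thus ?thesis unfolding tm using r1 by blast
  next
    case False
    show ?thesis
    proof (cases "B = 0")
      case True
      hence "A = 0" using False h by simp
      with True h(4) h(3) have "C = 1" by simp
      with True \<open>A = 0\<close> t e have False by simp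
      thus ?thesis ..
    next
      case B0: False
      hence Bp: "B > 0" using False h by simp
      have A0: "0 \<le> A" using False by simp
      note ineq = posineq[OF A0 h(1,2) Bp h(5,6)]
      have sq: "sqrtZ (A*B+B*C+C*A) = q" unfolding h(6) using h(5) by (rule sqrtZ_sq)
      have tm: "Tmap t = sort3 A B (A+B+C-2*q)" unfolding e Tmap_def prod.case if_not_P[OF False] sq by (rule refl)
      have Q: "A*B+B*(A+B+C-2*q)+(A+B+C-2*q)*A = \<bar>A+B-q\<bar>^2" using h(6) by (rule Qpos)
      have g: "gcd A (gcd B (A+B+C-2*q)) = 1" using h(4) h(6) Bp by (rule gpos)
      have s: "A+B+(A+B+C-2*q) > 0" using ineq False by simp
      note r = sort3_calT[OF s g abs_ge_zero Q]
      have es: "tsum t = A+B+C" unfolding e tsum_def by simp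
      have r1: "sort3 A B (A+B+C-2*q) \<in> calT" using r by (rule conjunct1)
      have r2: "tsum (sort3 A B (A+B+C-2*q)) = A+B+(A+B+C-2*q)" using r by (rule conjunct2)
      have "tsum (sort3 A B (A+B+C-2*q)) < tsum t" using r2 es ineq by linarith
      thus ?thesis unfolding tm using r1 by blast
    qed
  qed
qed

lemma fixpt: "Tmap (0,0,1) = (0,0,1)"
proof -
  have "sqrtZ 0 = 0" using sqrtZ_sq[of 0] by simp
  hence "Tmap (0,0,1) = sort3 0 0 1" unfolding Tmap_def by simp
  thus ?thesis by (simp add: sort3_cases)
qed

lemma calT_pos: "t \<in> calT \<Longrightarrow> tsum t > 0" unfolding calT_def tsum_def by auto

theorem mainTheorem7:
  shows "(\<forall>t \<in> calT. Tmap t \<in> calT)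
       \<and> Tmap (0, 0, 1) = (0, 0, 1)
       \<and> (\<forall>t \<in> calT. t \<noteq> (0, 0, 1) \<longrightarrow> tsum (Tmap t) < tsum t)
       \<and> (\<forall>t \<in> calT. \<exists>k::nat. (Tmap ^^ k) t = (0, 0, 1))"
proof (intro conjI ballI impI)
  fix t assume tc: "t \<in> calT"
  show "Tmap t \<in> calT"
  proof (cases "t = (0,0,1)")
    case True thus ?thesis using tc fixpt by simp
  next
    case False thus ?thesis using tc step by blast
  qed
next
  show "Tmap (0, 0, 1) = (0, 0, 1)" by (rule fixpt)
next
  fix t assume "t \<in> calT" "t \<noteq> (0,0,1)" thus "tsum (Tmap t) < tsum t" using step by blast
next
  fix t assume "t \<in> calT"
  thus "\<exists>k::nat. (Tmap ^^ k) t = (0, 0, 1)"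
  proof (induction "nat (tsum t)" arbitrary: t rule: less_induct)
    case less
    show ?case
    proof (cases "t = (0,0,1)")
      case True thus ?thesis by (intro exI[of _ 0]) simp
    next
      case False
      note st = step[OF less.prems False]
      have "nat (tsum (Tmap t)) < nat (tsum t)" using st calT_pos[of "Tmap t"] by simp
      then obtain k where k: "(Tmap ^^ k) (Tmap t) = (0,0,1)" using less.hyps st by blast
      have "(Tmap ^^ Suc k) t = (Tmap ^^ k) (Tmap t)" by (simp only: funpow_Suc_right comp_def)
      hence "(Tmap ^^ Suc k) t = (0,0,1)" using k by simp
      thus ?thesis by blast
    qed
  qed
qed

end
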